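(* Let $S$ be any set and $s,s':I_m\to S$. If $s$ and $s'$ are mirrored, then $(s,s')$ is a special pair.
   Context: $\mathscr{T}_m=\{\sigma\in\mathcal{S}_m \mid \exists t:\ \sigma(1)>\cdots>\sigma(t)=1,\ \sigma(t)<\cdots<\sigma(m)\}$, $\mathcal{S}_m$ acting on sequences $s:I_m\to S$ by $\sigma s=s\circ\sigma^{-1}$. $(\mathrm{rev}\,s)(i)=s(m+1-i)$. Two sequences $s,s'$ are mirrored if for every $\sigma\in\mathscr{T}_m$ there is $\sigma'\in\mathscr{T}_m$ with $\sigma s=\sigma's'$, and for every $\tau'\in\mathscr{T}_m$ there is $\tau\in\mathscr{T}_m$ with $\tau's'=\tau s$. An element $A\in\mathrm{Im}\,s$ is direct for $(s,s')$ if $s'(i)=A$ for all $i\in s^{-1}(A)$, and reverse for $(s,s')$ if $(\mathrm{rev}\,s')(i)=A$ for all $i\in s^{-1}(A)$. The pair $(s,s')$ is special if every $A\in\mathrm{Im}\,s$ is direct or reverse for $(s,s')$. *)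

theory Defs
  imports "HOL-Combinatorics.Permutations"
begin

text \<open>I_m = {1..m}. Sequences s : I_m -> S are modelled as functions nat => 'a,
 of which only the values on {1..m} are relevant; equality of sequences is
 equality on {1..m}.\<close>

definition Tperm :: "nat \<Rightarrow> (nat \<Rightarrow> nat) set" where
  "Tperm m = {\<sigma>. \<sigma> permutes {1..m} \<and>
     (\<exists>t\<in>{1..m}. (\<forall>i j. 1 \<le> i \<longrightarrow> i < j \<longrightarrow> j \<le> t \<longrightarrow> \<sigma> i > \<sigma> j)
                \<and> \<sigma> t = 1
                \<and> (\<forall>i j. t \<le> i \<longrightarrow> i < j \<longrightarrow> j \<le> m \<longrightarrow> \<sigma> i < \<sigma> j))}"

definition act :: "(nat \<Rightarrow> nat) \<Rightarrow> (nat \<Rightarrow> 'a) \<Rightarrow> (nat \<Rightarrow> 'a)" where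
  "act \<sigma> s = s \<circ> inv \<sigma>"

definition seq_eq :: "nat \<Rightarrow> (nat \<Rightarrow> 'a) \<Rightarrow> (nat \<Rightarrow> 'a) \<Rightarrow> bool" where
  "seq_eq m s s' \<longleftrightarrow> (\<forall>i\<in>{1..m}. s i = s' i)"

definition rev_seq :: "nat \<Rightarrow> (nat \<Rightarrow> 'a) \<Rightarrow> (nat \<Rightarrow> 'a)" where
  "rev_seq m s = (\<lambda>i. s (m + 1 - i))"

definition mirrored :: "nat \<Rightarrow> (nat \<Rightarrow> 'a) \<Rightarrow> (nat \<Rightarrow> 'a) \<Rightarrow> bool" where
  "mirrored m s s' \<longleftrightarrow>
     (\<forall>\<sigma>\<in>Tperm m. \<exists>\<sigma>'\<in>Tperm m. seq_eq m (act \<sigma> s) (act \<sigma>' s')) \<and>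
     (\<forall>\<tau>'\<in>Tperm m. \<exists>\<tau>\<in>Tperm m. seq_eq m (act \<tau>' s') (act \<tau> s))"

definition is_direct :: "nat \<Rightarrow> (nat \<Rightarrow> 'a) \<Rightarrow> (nat \<Rightarrow> 'a) \<Rightarrow> 'a \<Rightarrow> bool" where
  "is_direct m s s' A \<longleftrightarrow> (\<forall>i\<in>{1..m}. s i = A \<longrightarrow> s' i = A)"

definition is_reverse :: "nat \<Rightarrow> (nat \<Rightarrow> 'a) \<Rightarrow> (nat \<Rightarrow> 'a) \<Rightarrow> 'a \<Rightarrow> bool" where
  "is_reverse m s s' A \<longleftrightarrow> (\<forall>i\<in>{1..m}. s i = A \<longrightarrow> rev_seq m s' i = A)"

definition special_pair :: "nat \<Rightarrow> (nat \<Rightarrow> 'a) \<Rightarrow> (nat \<Rightarrow> 'a) \<Rightarrow> bool" where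
  "special_pair m s s' \<longleftrightarrow>
     (\<forall>A\<in>s ` {1..m}. is_direct m s s' A \<or> is_reverse m s s' A)"

end

theory Submission
  imports Defs
begin


inductive popr :: "'a list \<Rightarrow> 'a list \<Rightarrow> bool" where
  pNil: "popr [] []"
| pL: "popr xs z \<Longrightarrow> popr (x#xs) (x#z)"
| pR: "popr xs z \<Longrightarrow> popr (xs@[x]) (x#z)"

lemma popr_len: "popr v z \<Longrightarrow> length z = length v"
  by (induction rule: popr.induct) auto

lemma popr_rev: "popr v z \<Longrightarrow> popr (rev v) z"
  by (induction rule: popr.induct) (auto intro: popr.intros)

lemma popr_rev_iff: "popr (rev v) z \<longleftrightarrow> popr v z"
  using popr_rev[of "rev v"] popr_rev by force

lemma popr_self: "popr v v"
  by (induction v) (auto intro: popr.intros)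

lemma popr_Nil1: "popr [] z \<longleftrightarrow> z = []"
  by (auto elim: popr.cases intro: popr.intros)

lemma popr_Nil2: "popr v [] \<longleftrightarrow> v = []"
  by (auto elim: popr.cases intro: popr.intros)

lemma popr_Cons: "popr v (e#z) \<longleftrightarrow> (v \<noteq> [] \<and> hd v = e \<and> popr (tl v) z) \<or> (v \<noteq> [] \<and> last v = e \<and> popr (butlast v) z)"
proof
  assume "popr v (e#z)"
  then show "(v \<noteq> [] \<and> hd v = e \<and> popr (tl v) z) \<or> (v \<noteq> [] \<and> last v = e \<and> popr (butlast v) z)"
    by (cases rule: popr.cases) auto
next
  assume A: "(v \<noteq> [] \<and> hd v = e \<and> popr (tl v) z) \<or> (v \<noteq> [] \<and> last v = e \<and> popr (butlast v) z)"
  show "popr v (e#z)"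
  proof (cases "v \<noteq> [] \<and> hd v = e \<and> popr (tl v) z")
    case True
    then have "v = e # tl v" by (cases v) auto
    then show ?thesis using True pL by metis
  next
    case False
    then have B: "v \<noteq> [] \<and> last v = e \<and> popr (butlast v) z" using A by blast
    then have "v = butlast v @ [e]" by (metis append_butlast_last_id)
    then show ?thesis using B pR by metis
  qed
qed

lemma popr_rep: "popr (replicate n a) z \<longleftrightarrow> z = replicate n a"
proof (induction n arbitrary: z)
  case 0 then show ?case by (simp add: popr_Nil1)
next
  case (Suc n)
  show ?case
  proof (cases z)
    case Nil then show ?thesis by (simp add: popr_Nil2)
  next
    case (Cons e z')
    have "butlast (replicate (Suc n) a) = replicate n a" by (metis butlast_snoc replicate_Suc replicate_append_same)
    then show ?thesis using Suc.IH Cons by (auto simp: popr_Cons)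
  qed
qed

lemma decomp: "v = replicate (length v) a \<or> (\<exists>p q M. v = replicate p a @ M @ replicate q a \<and> M \<noteq> [] \<and> hd M \<noteq> a \<and> last M \<noteq> a)"
proof (induction v)
  case Nil then show ?case by simp
next
  case (Cons x v)
  from Cons.IH show ?case
  proof
    assume r: "v = replicate (length v) a"
    show ?thesis
    proof (cases "x = a")
      case True then show ?thesis using r by (metis length_Cons replicate_Suc)
    next
      case False
      then have "x # v = replicate 0 a @ [x] @ replicate (length v) a" using r by simp
      then show ?thesis using False by (intro disjI2 exI[of _ 0] exI[of _ "length v"] exI[of _ "[x]"]) auto
    qed
  next
    assume "\<exists>p q M. v = replicate p a @ M @ replicate q a \<and> M \<noteq> [] \<and> hd M \<noteq> a \<and> last M \<noteq> a"
    then obtain p q M where d: "v = replicate p a @ M @ replicate q a" "M \<noteq> []" "hd M \<noteq> a" "last M \<noteq> a" by blast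
    show ?thesis
    proof (cases "x = a")
      case True
      then have "x # v = replicate (Suc p) a @ M @ replicate q a" using d by simp
      then show ?thesis using d by blast
    next
      case False
      then have "x # v = replicate 0 a @ (x # replicate p a @ M) @ replicate q a" using d by simp
      moreover have "last (x # replicate p a @ M) = last M" using d by simp
      ultimately show ?thesis using d False by (metis list.distinct(1) list.sel(1))
    qed
  qed
qed

lemma K:
  assumes M: "M \<noteq> []" "hd M \<noteq> a" "last M \<noteq> a"
  shows "popr (replicate p a @ M @ replicate q a) (replicate j a @ z) \<longleftrightarrow>
    (\<exists>s t. s \<le> p \<and> t \<le> q \<and> s + t = j \<and> popr (replicate (p-s) a @ M @ replicate (q-t) a) z)"
proof (induction j arbitrary: p q)
  case 0 show ?case
  proof
    assume "popr (replicate p a @ M @ replicate q a) (replicate 0 a @ z)"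
    then show "\<exists>s t. s \<le> p \<and> t \<le> q \<and> s + t = 0 \<and> popr (replicate (p-s) a @ M @ replicate (q-t) a) z"
      by (intro exI[of _ 0]) simp
  next
    assume "\<exists>s t. s \<le> p \<and> t \<le> q \<and> s + t = 0 \<and> popr (replicate (p-s) a @ M @ replicate (q-t) a) z"
    then show "popr (replicate p a @ M @ replicate q a) (replicate 0 a @ z)" by force
  qed
next
  case (Suc j)
  let ?V = "replicate p a @ M @ replicate q a"
  have ne: "?V \<noteq> []" using M by simp
  have hd: "hd ?V = a \<longleftrightarrow> p > 0" using M by (cases p) auto
  have tl: "p > 0 \<Longrightarrow> tl ?V = replicate (p-1) a @ M @ replicate q a" by (cases p) auto
  have last: "last ?V = a \<longleftrightarrow> q > 0" using M by (cases q) auto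
  have bl: "q > 0 \<Longrightarrow> butlast ?V = replicate p a @ M @ replicate (q-1) a"
  proof -
    assume "q > 0"
    then obtain k where k: "q = Suc k" by (cases q) auto
    have "replicate q a = replicate k a @ [a]" using k by (simp add: replicate_append_same)
    then have "?V = (replicate p a @ M @ replicate k a) @ [a]" by simp
    then show ?thesis using k by (metis butlast_snoc diff_Suc_1)
  qed
  have r: "replicate (Suc j) a @ z = a # (replicate j a @ z)" by simp
  have A: "popr ?V (a # (replicate j a @ z)) \<longleftrightarrow> (hd ?V = a \<and> popr (tl ?V) (replicate j a @ z)) \<or> (last ?V = a \<and> popr (butlast ?V) (replicate j a @ z))"
    using popr_Cons[of ?V a "replicate j a @ z"] ne by blast
  have B: "(hd ?V = a \<and> popr (tl ?V) (replicate j a @ z)) \<longleftrightarrow> (p > 0 \<and> popr (replicate (p-1) a @ M @ replicate q a) (replicate j a @ z))"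
    using hd tl by metis
  have C: "(last ?V = a \<and> popr (butlast ?V) (replicate j a @ z)) \<longleftrightarrow> (q > 0 \<and> popr (replicate p a @ M @ replicate (q-1) a) (replicate j a @ z))"
    using last bl by metis
  have step: "popr ?V (replicate (Suc j) a @ z) \<longleftrightarrow>
     (p > 0 \<and> popr (replicate (p-1) a @ M @ replicate q a) (replicate j a @ z)) \<or>
     (q > 0 \<and> popr (replicate p a @ M @ replicate (q-1) a) (replicate j a @ z))"
    unfolding r A B C ..
  show ?case
  proof
    assume "popr ?V (replicate (Suc j) a @ z)"
    then consider "p > 0 \<and> popr (replicate (p-1) a @ M @ replicate q a) (replicate j a @ z)"
      | "q > 0 \<and> popr (replicate p a @ M @ replicate (q-1) a) (replicate j a @ z)" using step by blast
    then show "\<exists>s t. s \<le> p \<and> t \<le> q \<and> s + t = Suc j \<and> popr (replicate (p-s) a @ M @ replicate (q-t) a) z"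
    proof cases
      case 1
      then obtain s t where "s \<le> p-1" "t \<le> q" "s+t = j" "popr (replicate (p-1-s) a @ M @ replicate (q-t) a) z"
        using Suc.IH[of "p-1" q] by blast
      then show ?thesis using 1 by (intro exI[of _ "Suc s"] exI[of _ t]) auto
    next
      case 2
      then obtain s t where "s \<le> p" "t \<le> q-1" "s+t = j" "popr (replicate (p-s) a @ M @ replicate (q-1-t) a) z"
        using Suc.IH[of p "q-1"] by blast
      then show ?thesis using 2 by (intro exI[of _ s] exI[of _ "Suc t"]) auto
    qed
  next
    assume "\<exists>s t. s \<le> p \<and> t \<le> q \<and> s + t = Suc j \<and> popr (replicate (p-s) a @ M @ replicate (q-t) a) z"
    then obtain s t where st: "s \<le> p" "t \<le> q" "s + t = Suc j" "popr (replicate (p-s) a @ M @ replicate (q-t) a) z" by blast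
    show "popr ?V (replicate (Suc j) a @ z)"
    proof (cases "s > 0")
      case True
      have "\<exists>s t. s \<le> p-1 \<and> t \<le> q \<and> s + t = j \<and> popr (replicate (p-1-s) a @ M @ replicate (q-t) a) z"
        using st True by (intro exI[of _ "s-1"] exI[of _ t]) auto
      then have "popr (replicate (p-1) a @ M @ replicate q a) (replicate j a @ z)" using Suc.IH[of "p-1" q] by blast
      moreover have "p > 0" using True st by linarith
      ultimately show ?thesis unfolding step by blast
    next
      case False
      have "\<exists>s t. s \<le> p \<and> t \<le> q-1 \<and> s + t = j \<and> popr (replicate (p-s) a @ M @ replicate (q-1-t) a) z"
        using st False by (intro exI[of _ s] exI[of _ "t-1"]) auto
      then have "popr (replicate p a @ M @ replicate (q-1) a) (replicate j a @ z)" using Suc.IH[of p "q-1"] by blast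
      moreover have "q > 0" using False st by linarith
      ultimately show ?thesis unfolding step by blast
    qed
  qed
qed

lemma window:
  assumes M: "M \<noteq> []" "hd M \<noteq> a" "last M \<noteq> a" and e: "e \<noteq> a"
  shows "popr (replicate u a @ M @ replicate w a) (e#z) \<longleftrightarrow>
    (u = 0 \<and> e = hd M \<and> popr (tl M @ replicate w a) z) \<or> (w = 0 \<and> e = last M \<and> popr (replicate u a @ butlast M) z)"
proof -
  let ?V = "replicate u a @ M @ replicate w a"
  have hd: "hd ?V = e \<longleftrightarrow> u = 0 \<and> e = hd M" using M e by (cases u) auto
  have tl: "u = 0 \<Longrightarrow> tl ?V = tl M @ replicate w a" using M by (cases M) auto
  have last: "last ?V = e \<longleftrightarrow> w = 0 \<and> e = last M" using M e by (cases w) auto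
  have bl: "w = 0 \<Longrightarrow> butlast ?V = replicate u a @ butlast M" using M by (simp add: butlast_append)
  show ?thesis using popr_Cons[of ?V e z] M hd tl last bl by auto
qed

lemma E2:
  assumes M: "M \<noteq> []" "hd M \<noteq> a" "last M \<noteq> a" and e: "e \<noteq> a"
  shows "popr (replicate p a @ M @ replicate q a) (replicate j a @ e # z) \<longleftrightarrow>
    (\<exists>s t. s \<le> p \<and> t \<le> q \<and> s + t = j \<and>
      ((s = p \<and> e = hd M \<and> popr (tl M @ replicate (q-t) a) z) \<or>
       (t = q \<and> e = last M \<and> popr (replicate (p-s) a @ butlast M) z)))"
  unfolding K[OF M] window[OF M e] by (rule iffI; elim exE; auto)



lemma W2: "N @ b # replicate p a = replicate p a @ b # N \<Longrightarrow> b \<noteq> a \<Longrightarrow> rev N = N"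
proof (induction N rule: length_induct)
  case (1 N)
  let ?\<alpha> = "replicate p a"
  show ?case
  proof (cases "length N < p")
    case True
    have "(N @ b # ?\<alpha>) ! length N = b" by simp
    moreover have "(?\<alpha> @ b # N) ! length N = a" using True by (simp add: nth_append)
    ultimately show ?thesis using "1.prems" by simp
  next
    case False
    have "take p (N @ b # ?\<alpha>) = take p N" using False by simp
    moreover have "take p (?\<alpha> @ b # N) = ?\<alpha>" by simp
    ultimately have tp: "take p N = ?\<alpha>" using "1.prems" by simp
    define N2 where "N2 = drop p N"
    have N: "N = ?\<alpha> @ N2" using tp N2_def by (metis append_take_drop_id)
    have eq2: "N2 @ b # ?\<alpha> = b # ?\<alpha> @ N2" using "1.prems"(1) N by simp
    show ?thesis
    proof (cases N2)
      case Nil then show ?thesis using N by simp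
    next
      case (Cons c N3)
      have "N3 @ b # ?\<alpha> = ?\<alpha> @ b # N3" using eq2 Cons by simp
      moreover have "length N3 < length N" using N Cons by simp
      ultimately have "rev N3 = N3" using "1.IH" "1.prems"(2) by blast
      moreover have "c = b" using eq2 Cons by simp
      ultimately show ?thesis using N Cons \<open>N3 @ b # ?\<alpha> = ?\<alpha> @ b # N3\<close> by simp
    qed
  qed
qed

lemma W2':
  assumes "M \<noteq> []" "hd M = last M" "hd M \<noteq> a" "tl M @ replicate p a = replicate p a @ butlast M"
  shows "rev M = M"
proof (cases "tl M = []")
  case True
  then have "M = [hd M]" using assms(1) by (metis list.collapse)
  then show ?thesis by (metis rev_singleton_conv)
next
  case False
  define b where "b = hd M"
  define N where "N = butlast (tl M)"
  have tlM: "tl M = N @ [b]" using False assms(1,2) unfolding N_def b_def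
    by (metis append_butlast_last_id last_tl)
  have M: "M = b # N @ [b]" using tlM assms(1) unfolding b_def by (metis Cons_eq_appendI list.collapse)
  have "butlast M = b # N" using M by (simp add: butlast_append)
  then have "N @ b # replicate p a = replicate p a @ b # N" using assms(4) tlM by simp
  then have "rev N = N" using W2 assms(3) b_def by metis
  then show ?thesis using M by simp
qed

lemma lemC:
  fixes a :: 'a
  assumes IH: "\<And>v' w'::'a list. length v' < p + length M + q \<Longrightarrow> (\<forall>z. popr v' z \<longleftrightarrow> popr w' z) \<Longrightarrow> w' = v' \<or> w' = rev v'"
    and M: "M \<noteq> []" "hd M \<noteq> a" "last M \<noteq> a" and qp: "q < p"
    and H: "\<forall>z. popr (replicate p a @ M @ replicate q a) z \<longleftrightarrow> popr (replicate q a @ M @ replicate p a) z"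
  shows "rev M = M"
proof -
  let ?V = "replicate p a @ M @ replicate q a"
  let ?W = "replicate q a @ M @ replicate p a"
  have vside: "popr ?V (replicate q a @ e # z) \<longleftrightarrow> e = last M \<and> popr (replicate p a @ butlast M) z" if "e \<noteq> a" for e z
  proof -
    have "popr ?V (replicate q a @ e # z) \<longleftrightarrow> (\<exists>s t. s \<le> p \<and> t \<le> q \<and> s + t = q \<and>
      ((s = p \<and> e = hd M \<and> popr (tl M @ replicate (q-t) a) z) \<or>
       (t = q \<and> e = last M \<and> popr (replicate (p-s) a @ butlast M) z)))" by (rule E2[OF M that])
    also have "\<dots> \<longleftrightarrow> e = last M \<and> popr (replicate p a @ butlast M) z"
    proof
      assume "\<exists>s t. s \<le> p \<and> t \<le> q \<and> s + t = q \<and>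
        ((s = p \<and> e = hd M \<and> popr (tl M @ replicate (q-t) a) z) \<or>
         (t = q \<and> e = last M \<and> popr (replicate (p-s) a @ butlast M) z))"
      then obtain s t where st: "s \<le> p" "t \<le> q" "s + t = q"
        "(s = p \<and> e = hd M \<and> popr (tl M @ replicate (q-t) a) z) \<or>
         (t = q \<and> e = last M \<and> popr (replicate (p-s) a @ butlast M) z)" by blast
      have "s \<noteq> p" using st qp by linarith
      then have "t = q" "e = last M" "popr (replicate (p-s) a @ butlast M) z" using st by auto
      moreover have "s = 0" using st \<open>t = q\<close> by linarith
      ultimately show "e = last M \<and> popr (replicate p a @ butlast M) z" by simp
    next
      assume "e = last M \<and> popr (replicate p a @ butlast M) z"
      then show "\<exists>s t. s \<le> p \<and> t \<le> q \<and> s + t = q \<and>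
        ((s = p \<and> e = hd M \<and> popr (tl M @ replicate (q-t) a) z) \<or>
         (t = q \<and> e = last M \<and> popr (replicate (p-s) a @ butlast M) z))"
        by (intro exI[of _ 0] exI[of _ q]) simp
    qed
    finally show ?thesis .
  qed
  have wside: "popr ?W (replicate q a @ e # z) \<longleftrightarrow> e = hd M \<and> popr (tl M @ replicate p a) z" if "e \<noteq> a" for e z
  proof -
    have "popr ?W (replicate q a @ e # z) \<longleftrightarrow> (\<exists>s t. s \<le> q \<and> t \<le> p \<and> s + t = q \<and>
      ((s = q \<and> e = hd M \<and> popr (tl M @ replicate (p-t) a) z) \<or>
       (t = p \<and> e = last M \<and> popr (replicate (q-s) a @ butlast M) z)))" by (rule E2[OF M that])
    also have "\<dots> \<longleftrightarrow> e = hd M \<and> popr (tl M @ replicate p a) z"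
    proof
      assume "\<exists>s t. s \<le> q \<and> t \<le> p \<and> s + t = q \<and>
        ((s = q \<and> e = hd M \<and> popr (tl M @ replicate (p-t) a) z) \<or>
         (t = p \<and> e = last M \<and> popr (replicate (q-s) a @ butlast M) z))"
      then obtain s t where st: "s \<le> q" "t \<le> p" "s + t = q"
        "(s = q \<and> e = hd M \<and> popr (tl M @ replicate (p-t) a) z) \<or>
         (t = p \<and> e = last M \<and> popr (replicate (q-s) a @ butlast M) z)" by blast
      have "t \<noteq> p" using st qp by linarith
      then have "s = q" "e = hd M" "popr (tl M @ replicate (p-t) a) z" using st by auto
      moreover have "t = 0" using st \<open>s = q\<close> by linarith
      ultimately show "e = hd M \<and> popr (tl M @ replicate p a) z" by simp
    next
      assume "e = hd M \<and> popr (tl M @ replicate p a) z"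
      then show "\<exists>s t. s \<le> q \<and> t \<le> p \<and> s + t = q \<and>
        ((s = q \<and> e = hd M \<and> popr (tl M @ replicate (p-t) a) z) \<or>
         (t = p \<and> e = last M \<and> popr (replicate (q-s) a @ butlast M) z))"
        by (intro exI[of _ q] exI[of _ 0]) simp
    qed
    finally show ?thesis .
  qed
  have "popr ?V (replicate q a @ last M # (replicate p a @ butlast M))"
    using vside[OF M(3)] popr_self by blast
  then have "popr ?W (replicate q a @ last M # (replicate p a @ butlast M))" using H by blast
  then have "last M = hd M" by (simp add: wside[OF M(3)])
  then have hl: "hd M = last M" by simp
  have eqP: "\<forall>z. popr (replicate p a @ butlast M) z \<longleftrightarrow> popr (tl M @ replicate p a) z"
  proof
    fix z
    have "popr (replicate p a @ butlast M) z \<longleftrightarrow> popr ?V (replicate q a @ last M # z)" using vside[OF M(3)] by simp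
    also have "\<dots> \<longleftrightarrow> popr ?W (replicate q a @ last M # z)" using H by blast
    also have "\<dots> \<longleftrightarrow> popr (tl M @ replicate p a) z" using wside[OF M(3)] hl by simp
    finally show "popr (replicate p a @ butlast M) z \<longleftrightarrow> popr (tl M @ replicate p a) z" .
  qed
  have "length M > 0" using M by simp
  moreover have "length (replicate p a @ butlast M) = p + (length M - 1)" by simp
  ultimately have len: "length (replicate p a @ butlast M) < p + length M + q" by linarith
  have "tl M @ replicate p a = replicate p a @ butlast M \<or> tl M @ replicate p a = rev (replicate p a @ butlast M)"
    by (rule IH[OF len eqP])
  then show ?thesis
  proof
    assume "tl M @ replicate p a = replicate p a @ butlast M"
    then show ?thesis by (rule W2'[OF M(1) hl M(2)])
  next
    assume "tl M @ replicate p a = rev (replicate p a @ butlast M)"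
    then have "tl M = rev (butlast M)" by simp
    then have "rev (tl M) = butlast M" by simp
    moreover have "rev M = rev (tl M) @ [hd M]" using M by (metis rev.simps(2) list.collapse)
    ultimately have "rev M = butlast M @ [hd M]" by simp
    then show ?thesis using hl M by (metis append_butlast_last_id)
  qed
qed



lemma prefix_nonA:
  assumes M: "M \<noteq> []" "hd M \<noteq> a" "last M \<noteq> a"
  shows "(\<exists>e z. e \<noteq> a \<and> popr (replicate p a @ M @ replicate q a) (replicate j a @ e # z)) \<longleftrightarrow>
         (\<exists>s t. s \<le> p \<and> t \<le> q \<and> s + t = j \<and> (s = p \<or> t = q))"
proof
  assume "\<exists>e z. e \<noteq> a \<and> popr (replicate p a @ M @ replicate q a) (replicate j a @ e # z)"
  then obtain e z where ez: "e \<noteq> a" "popr (replicate p a @ M @ replicate q a) (replicate j a @ e # z)" by blast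
  from ez(2)[unfolded E2[OF M ez(1)]]
  obtain s t where "s \<le> p" "t \<le> q" "s + t = j" "s = p \<or> t = q" by blast
  then show "\<exists>s t. s \<le> p \<and> t \<le> q \<and> s + t = j \<and> (s = p \<or> t = q)" by blast
next
  assume "\<exists>s t. s \<le> p \<and> t \<le> q \<and> s + t = j \<and> (s = p \<or> t = q)"
  then obtain s t where st: "s \<le> p" "t \<le> q" "s + t = j" "s = p \<or> t = q" by blast
  show "\<exists>e z. e \<noteq> a \<and> popr (replicate p a @ M @ replicate q a) (replicate j a @ e # z)"
  proof (cases "s = p")
    case True
    have "popr (replicate p a @ M @ replicate q a) (replicate j a @ hd M # (tl M @ replicate (q-t) a))"
      unfolding E2[OF M M(2)] using st True popr_self by blast
    then show ?thesis using M(2) by blast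
  next
    case False
    then have "t = q" using st by blast
    have "popr (replicate p a @ M @ replicate q a) (replicate j a @ last M # (replicate (p-s) a @ butlast M))"
      unfolding E2[OF M M(3)] using st \<open>t = q\<close> popr_self by blast
    then show ?thesis using M(3) by blast
  qed
qed

lemma min_ex: "\<exists>s t. s \<le> p \<and> t \<le> q \<and> s + t = min p q \<and> (s = (p::nat) \<or> t = q)"
proof (cases "p \<le> q")
  case True then show ?thesis by (intro exI[of _ p] exI[of _ 0]) simp
next
  case False then show ?thesis by (intro exI[of _ 0] exI[of _ q]) simp
qed

lemma min_le: "s \<le> p \<Longrightarrow> t \<le> q \<Longrightarrow> s + t = j \<Longrightarrow> (s = (p::nat) \<or> t = q) \<Longrightarrow> min p q \<le> j"
  by auto

lemma core:
  fixes a :: 'a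
  assumes IH: "\<And>v' w'::'a list. length v' < p + length M + q \<Longrightarrow> (\<forall>z. popr v' z \<longleftrightarrow> popr w' z) \<Longrightarrow> w' = v' \<or> w' = rev v'"
    and M: "M \<noteq> []" "hd M \<noteq> a" "last M \<noteq> a"
    and H: "\<forall>z. popr (replicate p a @ M @ replicate q a) z \<longleftrightarrow> popr (replicate p' a @ M @ replicate q' a) z"
    and sum: "p + q = p' + q'"
  shows "replicate p' a @ M @ replicate q' a = replicate p a @ M @ replicate q a \<or>
         replicate p' a @ M @ replicate q' a = rev (replicate p a @ M @ replicate q a)"
proof -
  let ?V = "replicate p a @ M @ replicate q a"
  let ?W = "replicate p' a @ M @ replicate q' a"
  have HH: "(\<exists>e z. e \<noteq> a \<and> popr ?V (replicate j a @ e # z)) \<longleftrightarrow> (\<exists>e z. e \<noteq> a \<and> popr ?W (replicate j a @ e # z))" for j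
    using H by blast
  have m1: "min p' q' \<le> min p q"
  proof -
    have "\<exists>e z. e \<noteq> a \<and> popr ?V (replicate (min p q) a @ e # z)"
      unfolding prefix_nonA[OF M] using min_ex by blast
    then have "\<exists>e z. e \<noteq> a \<and> popr ?W (replicate (min p q) a @ e # z)" using HH by blast
    then obtain s t where "s \<le> p'" "t \<le> q'" "s + t = min p q" "s = p' \<or> t = q'"
      unfolding prefix_nonA[OF M] by blast
    then show ?thesis using min_le by blast
  qed
  have m2: "min p q \<le> min p' q'"
  proof -
    have "\<exists>e z. e \<noteq> a \<and> popr ?W (replicate (min p' q') a @ e # z)"
      unfolding prefix_nonA[OF M] using min_ex by blast
    then have "\<exists>e z. e \<noteq> a \<and> popr ?V (replicate (min p' q') a @ e # z)" using HH by blast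
    then obtain s t where "s \<le> p" "t \<le> q" "s + t = min p' q'" "s = p \<or> t = q"
      unfolding prefix_nonA[OF M] by blast
    then show ?thesis using min_le by blast
  qed
  have cases: "(p' = p \<and> q' = q) \<or> (p' = q \<and> q' = p)" using m1 m2 sum by linarith
  then show ?thesis
  proof
    assume "p' = p \<and> q' = q" then show ?thesis by simp
  next
    assume sw: "p' = q \<and> q' = p"
    show ?thesis
    proof (cases "p = q")
      case True then show ?thesis using sw by simp
    next
      case False
      have "rev M = M"
      proof (cases "q < p")
        case True
        have H1: "\<forall>z. popr (replicate p a @ M @ replicate q a) z \<longleftrightarrow> popr (replicate q a @ M @ replicate p a) z"
          using H sw by simp
        show ?thesis by (rule lemC[OF IH M True H1])
      next
        case False2: False
        then have pq: "p < q" using False by linarith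
        have IH': "w' = v' \<or> w' = rev v'" if "length v' < q + length M + p" "\<forall>z. popr v' z \<longleftrightarrow> popr w' z" for v' w' :: "'a list"
        proof -
          have "length v' < p + length M + q" using that(1) by linarith
          then show ?thesis using IH that(2) by blast
        qed
        have H2: "\<forall>z. popr (replicate q a @ M @ replicate p a) z \<longleftrightarrow> popr (replicate p a @ M @ replicate q a) z"
          using H sw by simp
        show ?thesis by (rule lemC[OF IH' M pq H2])
      qed
      then show ?thesis using sw by simp
    qed
  qed
qed

lemma Kfull:
  assumes M: "M \<noteq> []" "hd M \<noteq> a" "last M \<noteq> a"
  shows "popr (replicate p a @ M @ replicate q a) (replicate (p+q) a @ z) \<longleftrightarrow> popr M z"
proof -
  have "popr (replicate p a @ M @ replicate q a) (replicate (p+q) a @ z) \<longleftrightarrow>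
    (\<exists>s t. s \<le> p \<and> t \<le> q \<and> s + t = p + q \<and> popr (replicate (p-s) a @ M @ replicate (q-t) a) z)"
    by (rule K[OF M])
  also have "\<dots> \<longleftrightarrow> popr M z"
  proof
    assume "\<exists>s t. s \<le> p \<and> t \<le> q \<and> s + t = p + q \<and> popr (replicate (p-s) a @ M @ replicate (q-t) a) z"
    then obtain s t where "s \<le> p" "t \<le> q" "s + t = p + q" "popr (replicate (p-s) a @ M @ replicate (q-t) a) z" by blast
    moreover then have "s = p" "t = q" by linarith+
    ultimately show "popr M z" by simp
  next
    assume "popr M z"
    then show "\<exists>s t. s \<le> p \<and> t \<le> q \<and> s + t = p + q \<and> popr (replicate (p-s) a @ M @ replicate (q-t) a) z"
      by (intro exI[of _ p] exI[of _ q]) simp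
  qed
  finally show ?thesis .
qed

lemma Kbound:
  assumes M: "M \<noteq> []" "hd M \<noteq> a" "last M \<noteq> a"
    and "popr (replicate p a @ M @ replicate q a) (replicate j a @ z)"
  shows "j \<le> p + q"
proof -
  from assms(4)[unfolded K[OF M]] obtain s t where "s \<le> p" "t \<le> q" "s + t = j" by blast
  then show ?thesis by linarith
qed

lemma step:
  fixes v w :: "'a list"
  assumes IH: "\<And>v' w'::'a list. length v' < length v \<Longrightarrow> (\<forall>z. popr v' z \<longleftrightarrow> popr w' z) \<Longrightarrow> w' = v' \<or> w' = rev v'"
    and H: "\<forall>z. popr v z \<longleftrightarrow> popr w z"
  shows "w = v \<or> w = rev v"
proof (cases "v = []")
  case True
  have "popr w v" using H popr_self by blast
  then have "w = []" using True popr_Nil2 by blast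
  then show ?thesis using True by simp
next
  case False
  define a where "a = hd v"
  have pwv: "popr w v" using H popr_self by blast
  from decomp[of v a] show ?thesis
  proof
    assume r: "v = replicate (length v) a"
    obtain n where r': "v = replicate n a" using r by blast
    have "popr v w" using H popr_self by blast
    then have "popr (replicate n a) w" using r' by simp
    then have "w = replicate n a" by (simp add: popr_rep)
    then have "w = v" using r' by simp
    then show ?thesis by simp
  next
    assume "\<exists>p q M. v = replicate p a @ M @ replicate q a \<and> M \<noteq> [] \<and> hd M \<noteq> a \<and> last M \<noteq> a"
    then obtain p q M where v: "v = replicate p a @ M @ replicate q a" and M: "M \<noteq> []" "hd M \<noteq> a" "last M \<noteq> a"
      by blast
    have p0: "p > 0"
    proof (rule ccontr)
      assume "\<not> p > 0"
      then have "hd v = hd M" using v M by simp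
      then show False using M a_def by simp
    qed
    from decomp[of w a] show ?thesis
    proof
      assume r: "w = replicate (length w) a"
      obtain n where r': "w = replicate n a" using r by blast
      have "popr (replicate n a) v" using pwv r' by simp
      then have "v = replicate n a" by (simp add: popr_rep)
      moreover have "hd M \<in> set v" using v M by simp
      ultimately have "hd M \<in> set (replicate n a)" by simp
      then show ?thesis using M by simp
    next
      assume "\<exists>p q M. w = replicate p a @ M @ replicate q a \<and> M \<noteq> [] \<and> hd M \<noteq> a \<and> last M \<noteq> a"
      then obtain p' q' M' where w: "w = replicate p' a @ M' @ replicate q' a" and M': "M' \<noteq> []" "hd M' \<noteq> a" "last M' \<noteq> a"
        by blast
      have s1: "p + q \<le> p' + q'"
      proof -
        have "popr v (replicate (p+q) a @ M)" unfolding v Kfull[OF M] by (rule popr_self)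
        then have "popr w (replicate (p+q) a @ M)" using H by blast
        then show ?thesis unfolding w using Kbound[OF M'] by blast
      qed
      have s2: "p' + q' \<le> p + q"
      proof -
        have "popr w (replicate (p'+q') a @ M')" unfolding w Kfull[OF M'] by (rule popr_self)
        then have "popr v (replicate (p'+q') a @ M')" using H by blast
        then show ?thesis unfolding v using Kbound[OF M] by blast
      qed
      have sum: "p + q = p' + q'" using s1 s2 by linarith
      have eqM: "\<forall>z. popr M z \<longleftrightarrow> popr M' z"
      proof
        fix z
        have "popr M z \<longleftrightarrow> popr v (replicate (p+q) a @ z)" unfolding v Kfull[OF M] ..
        also have "\<dots> \<longleftrightarrow> popr w (replicate (p'+q') a @ z)" using H sum by simp
        also have "\<dots> \<longleftrightarrow> popr M' z" unfolding w Kfull[OF M'] ..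
        finally show "popr M z \<longleftrightarrow> popr M' z" .
      qed
      have "length M < length v" using v p0 by simp
      then have "M' = M \<or> M' = rev M" by (rule IH[OF _ eqM])
      have IHv: "\<And>v' w'::'a list. length v' < p + length M + q \<Longrightarrow> (\<forall>z. popr v' z \<longleftrightarrow> popr w' z) \<Longrightarrow> w' = v' \<or> w' = rev v'"
      proof -
        fix v' w' :: "'a list"
        assume "length v' < p + length M + q" "\<forall>z. popr v' z \<longleftrightarrow> popr w' z"
        moreover have "length v = p + length M + q" using v by simp
        ultimately show "w' = v' \<or> w' = rev v'" using IH by simp
      qed
      from \<open>M' = M \<or> M' = rev M\<close> show ?thesis
      proof
        assume mm: "M' = M"
        have H': "\<forall>z. popr (replicate p a @ M @ replicate q a) z \<longleftrightarrow> popr (replicate p' a @ M @ replicate q' a) z"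
          using H unfolding v w mm .
        have "w = v \<or> w = rev v" using core[OF IHv M H' sum] unfolding v w mm .
        then show ?thesis .
      next
        assume mm: "M' = rev M"
        have rw: "rev w = replicate q' a @ M @ replicate p' a" unfolding w mm by simp
        have H2: "\<forall>z. popr v z \<longleftrightarrow> popr (rev w) z"
        proof
          fix z
          show "popr v z \<longleftrightarrow> popr (rev w) z" unfolding popr_rev_iff using H by blast
        qed
        have H': "\<forall>z. popr (replicate p a @ M @ replicate q a) z \<longleftrightarrow> popr (replicate q' a @ M @ replicate p' a) z"
          using H2 unfolding v rw .
        have sum': "p + q = q' + p'" using sum by linarith
        have "rev w = v \<or> rev w = rev v" using core[OF IHv M H' sum'] unfolding v rw .
        then show ?thesis by auto
      qed
    qed
  qed
qed

theorem popr_det: "(\<forall>z. popr v z \<longleftrightarrow> popr w z) \<Longrightarrow> w = v \<or> w = rev v"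
proof (induction "length v" arbitrary: v w rule: less_induct)
  case less
  show ?case by (rule step[OF less.hyps less.prems]) simp
qed



definition word :: "nat \<Rightarrow> (nat \<Rightarrow> 'a) \<Rightarrow> 'a list" where
  "word m f = map f [1..<Suc m]"

lemma word_Suc: "word (Suc m) f = word m f @ [f (Suc m)]"
  unfolding word_def by simp

lemma word_Suc_Cons: "word (Suc m) f = f 1 # word m (\<lambda>i. f (Suc i))"
proof -
  have h1: "[1..<Suc (Suc m)] = 1 # [Suc 1..<Suc (Suc m)]" by (rule upt_conv_Cons) simp
  have h2: "map Suc [1..<Suc m] = [Suc 1..<Suc (Suc m)]" by (rule map_Suc_upt)
  have "map f [1..<Suc (Suc m)] = map f (1 # map Suc [1..<Suc m])" by (simp only: h1 h2)
  also have "\<dots> = f 1 # map (\<lambda>i. f (Suc i)) [1..<Suc m]" by (simp add: comp_def)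
  finally show ?thesis unfolding word_def .
qed

lemma word_cong: "(\<And>k. k \<in> {1..m} \<Longrightarrow> f k = g k) \<Longrightarrow> word m f = word m g"
  unfolding word_def by (rule map_cong) auto

lemma word_nth: "k < m \<Longrightarrow> word m f ! k = f (Suc k)"
  unfolding word_def by (simp add: nth_upt del: upt_Suc)

lemma word_len: "length (word m f) = m"
  unfolding word_def by simp

lemma TpermD:
  assumes "\<sigma> \<in> Tperm m"
  obtains t where "\<sigma> permutes {1..m}" "t \<in> {1..m}"
    "\<And>i j. 1 \<le> i \<Longrightarrow> i < j \<Longrightarrow> j \<le> t \<Longrightarrow> \<sigma> i > \<sigma> j" "\<sigma> t = 1"
    "\<And>i j. t \<le> i \<Longrightarrow> i < j \<Longrightarrow> j \<le> m \<Longrightarrow> \<sigma> i < \<sigma> j"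
proof -
  have P: "\<sigma> permutes {1..m}" using assms unfolding Tperm_def by simp
  have "\<exists>t\<in>{1..m}. (\<forall>i j. 1 \<le> i \<longrightarrow> i < j \<longrightarrow> j \<le> t \<longrightarrow> \<sigma> i > \<sigma> j)
                \<and> \<sigma> t = 1
                \<and> (\<forall>i j. t \<le> i \<longrightarrow> i < j \<longrightarrow> j \<le> m \<longrightarrow> \<sigma> i < \<sigma> j)"
    using assms unfolding Tperm_def by simp
  then obtain t where t: "t \<in> {1..m}" and d: "\<forall>i j. 1 \<le> i \<longrightarrow> i < j \<longrightarrow> j \<le> t \<longrightarrow> \<sigma> i > \<sigma> j"
    and t1: "\<sigma> t = 1" and c: "\<forall>i j. t \<le> i \<longrightarrow> i < j \<longrightarrow> j \<le> m \<longrightarrow> \<sigma> i < \<sigma> j" by blast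
  show ?thesis
  proof (rule that[OF P t _ t1])
    fix i j assume "1 \<le> i" "i < j" "j \<le> t" then show "\<sigma> i > \<sigma> j" using d by blast
  next
    fix i j assume "t \<le> i" "i < j" "j \<le> m" then show "\<sigma> i < \<sigma> j" using c by blast
  qed
qed

lemma TpermI:
  assumes "\<sigma> permutes {1..m}" "t \<in> {1..m}"
    "\<And>i j. 1 \<le> i \<Longrightarrow> i < j \<Longrightarrow> j \<le> t \<Longrightarrow> \<sigma> i > \<sigma> j" "\<sigma> t = 1"
    "\<And>i j. t \<le> i \<Longrightarrow> i < j \<Longrightarrow> j \<le> m \<Longrightarrow> \<sigma> i < \<sigma> j"
  shows "\<sigma> \<in> Tperm m"
  unfolding Tperm_def using assms by blast

lemma perm_range: assumes P: "\<sigma> permutes {1..m}" and i: "i \<in> {1..m}" shows "\<sigma> i \<in> {1..m}"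
proof -
  have "\<sigma> i \<in> {1..m} \<longleftrightarrow> i \<in> {1..m}" by (rule permutes_in_image[OF P])
  then show ?thesis using i by blast
qed

lemma T_max:
  assumes T: "\<sigma> \<in> Tperm m" and m: "m \<ge> 2"
  shows "\<sigma> 1 = m \<or> \<sigma> m = m"
proof -
  obtain t where P: "\<sigma> permutes {1..m}" and t: "t \<in> {1..m}"
    and dec: "\<And>i j. 1 \<le> i \<Longrightarrow> i < j \<Longrightarrow> j \<le> t \<Longrightarrow> \<sigma> i > \<sigma> j" and t1: "\<sigma> t = 1"
    and inc: "\<And>i j. t \<le> i \<Longrightarrow> i < j \<Longrightarrow> j \<le> m \<Longrightarrow> \<sigma> i < \<sigma> j"
    by (rule TpermD[OF T]) blast
  have "m \<in> \<sigma> ` {1..m}" using permutes_image[OF P] m by simp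
  then obtain i where i: "i \<in> {1..m}" "\<sigma> i = m" by blast
  have r1: "\<sigma> 1 \<le> m" using perm_range[OF P, of 1] m by simp
  have rm: "\<sigma> m \<le> m" using perm_range[OF P, of m] m by simp
  show ?thesis
  proof (rule ccontr)
    assume "\<not> ?thesis"
    then have "i \<noteq> 1" "i \<noteq> m" using i by auto
    show False
    proof (cases "i \<le> t")
      case True
      then have "\<sigma> 1 > \<sigma> i" using dec[of 1 i] \<open>i \<noteq> 1\<close> i by auto
      then show False using r1 i by simp
    next
      case False
      then have "\<sigma> i < \<sigma> m" using inc[of i m] \<open>i \<noteq> m\<close> i by auto
      then show False using rm i by simp
    qed
  qed
qed

lemma T_restrict:
  assumes T: "\<sigma> \<in> Tperm (Suc m)" and fx0: "\<sigma> (Suc m) = Suc m" and m: "m \<ge> 1"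
  shows "\<sigma> \<in> Tperm m"
proof -
  obtain t where P: "\<sigma> permutes {1..Suc m}" and t: "t \<in> {1..Suc m}"
    and dec: "\<And>i j. 1 \<le> i \<Longrightarrow> i < j \<Longrightarrow> j \<le> t \<Longrightarrow> \<sigma> i > \<sigma> j" and t1: "\<sigma> t = 1"
    and inc: "\<And>i j. t \<le> i \<Longrightarrow> i < j \<Longrightarrow> j \<le> Suc m \<Longrightarrow> \<sigma> i < \<sigma> j"
    by (rule TpermD[OF T]) blast
  have P': "\<sigma> permutes {1..m}"
  proof (rule permutes_superset[OF P])
    fix x assume "x \<in> {1..Suc m} - {1..m}"
    then have "x = Suc m" by auto
    then show "\<sigma> x = x" using fx0 by simp
  qed
  have "t \<noteq> Suc m" using t1 fx0 m by auto
  then have t': "t \<in> {1..m}" using t by auto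
  show ?thesis
    by (rule TpermI[OF P' t' dec t1]) (auto intro: inc)
qed

lemma T_extend:
  assumes T: "\<sigma> \<in> Tperm m" and m: "m \<ge> 1"
  shows "\<sigma> \<in> Tperm (Suc m)"
proof -
  obtain t where P: "\<sigma> permutes {1..m}" and t: "t \<in> {1..m}"
    and dec: "\<And>i j. 1 \<le> i \<Longrightarrow> i < j \<Longrightarrow> j \<le> t \<Longrightarrow> \<sigma> i > \<sigma> j" and t1: "\<sigma> t = 1"
    and inc: "\<And>i j. t \<le> i \<Longrightarrow> i < j \<Longrightarrow> j \<le> m \<Longrightarrow> \<sigma> i < \<sigma> j"
    by (rule TpermD[OF T]) blast
  have P': "\<sigma> permutes {1..Suc m}" by (rule permutes_subset[OF P]) auto
  have fx: "\<sigma> (Suc m) = Suc m" using permutes_not_in[OF P] by simp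
  have t': "t \<in> {1..Suc m}" using t by auto
  show ?thesis
  proof (rule TpermI[OF P' t' dec t1])
    fix i j assume ij: "t \<le> i" "i < j" "j \<le> Suc m"
    show "\<sigma> i < \<sigma> j"
    proof (cases "j \<le> m")
      case True then show ?thesis using inc ij by blast
    next
      case False
      then have "j = Suc m" using ij by simp
      moreover have "\<sigma> i \<in> {1..m}" using perm_range[OF P] ij t by auto
      ultimately show ?thesis using fx by simp
    qed
  qed
qed

definition shift :: "nat \<Rightarrow> (nat \<Rightarrow> nat) \<Rightarrow> nat \<Rightarrow> nat" where
  "shift m \<sigma> = (\<lambda>i. if 1 \<le> i \<and> i \<le> m then \<sigma> (Suc i) else i)"

definition extp :: "nat \<Rightarrow> (nat \<Rightarrow> nat) \<Rightarrow> nat \<Rightarrow> nat" where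
  "extp m \<sigma> = (\<lambda>i. if i = 1 then Suc m else if 2 \<le> i \<and> i \<le> Suc m then \<sigma> (i - 1) else i)"

lemma T_shift:
  assumes T: "\<sigma> \<in> Tperm (Suc m)" and s1: "\<sigma> 1 = Suc m" and m: "m \<ge> 1"
  shows "shift m \<sigma> \<in> Tperm m"
proof -
  obtain t where P: "\<sigma> permutes {1..Suc m}" and t: "t \<in> {1..Suc m}"
    and dec: "\<And>i j. 1 \<le> i \<Longrightarrow> i < j \<Longrightarrow> j \<le> t \<Longrightarrow> \<sigma> i > \<sigma> j" and t1: "\<sigma> t = 1"
    and inc: "\<And>i j. t \<le> i \<Longrightarrow> i < j \<Longrightarrow> j \<le> Suc m \<Longrightarrow> \<sigma> i < \<sigma> j"
    by (rule TpermD[OF T]) blast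
  let ?f = "shift m \<sigma>"
  have inj: "inj_on ?f {1..m}"
  proof (rule inj_onI)
    fix x y assume "x \<in> {1..m}" "y \<in> {1..m}" "?f x = ?f y"
    then have "\<sigma> (Suc x) = \<sigma> (Suc y)" unfolding shift_def by auto
    then show "x = y" using permutes_inj[OF P] by (auto dest: injD)
  qed
  have sub: "?f ` {1..m} \<subseteq> {1..m}"
  proof
    fix y assume "y \<in> ?f ` {1..m}"
    then obtain x where x: "x \<in> {1..m}" "y = \<sigma> (Suc x)" unfolding shift_def by auto
    have "y \<in> {1..Suc m}" using perm_range[OF P, of "Suc x"] x by auto
    moreover have "y \<noteq> Suc m"
    proof
      assume "y = Suc m"
      then have "\<sigma> (Suc x) = \<sigma> 1" using x s1 by simp
      then have "Suc x = 1" by (rule injD[OF permutes_inj[OF P]])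
      then show False using x by simp
    qed
    ultimately show "y \<in> {1..m}" by auto
  qed
  have img: "?f ` {1..m} = {1..m}" by (rule endo_inj_surj[OF _ sub inj]) simp
  have "bij_betw ?f {1..m} {1..m}" unfolding bij_betw_def using inj img by blast
  then have P': "?f permutes {1..m}"
    by (rule bij_imp_permutes) (auto simp: shift_def)
  have "t \<noteq> 1" using t1 s1 m by auto
  then have t': "t - 1 \<in> {1..m}" using t by auto
  show ?thesis
  proof (rule TpermI[OF P' t'])
    fix i j assume "1 \<le> i" "i < j" "j \<le> t - 1"
    then show "?f i > ?f j" unfolding shift_def using dec[of "Suc i" "Suc j"] t by auto
  next
    show "?f (t - 1) = 1" unfolding shift_def using t' t1 \<open>t \<noteq> 1\<close> by auto
  next
    fix i j assume "t - 1 \<le> i" "i < j" "j \<le> m"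
    then show "?f i < ?f j" unfolding shift_def using inc[of "Suc i" "Suc j"] t' by auto
  qed
qed

lemma act_shift:
  assumes T: "\<sigma> \<in> Tperm (Suc m)" and s1: "\<sigma> 1 = Suc m" and m: "m \<ge> 1" and k: "k \<in> {1..m}"
  shows "act \<sigma> s k = act (shift m \<sigma>) (\<lambda>i. s (Suc i)) k"
proof -
  have P: "\<sigma> permutes {1..Suc m}" using T unfolding Tperm_def by blast
  have P': "shift m \<sigma> permutes {1..m}" using T_shift[OF T s1 m] unfolding Tperm_def by blast
  define x where "x = inv (shift m \<sigma>) k"
  have fx: "shift m \<sigma> x = k" using permutes_inv_eq[OF P'] x_def by blast
  have x: "x \<in> {1..m}"
  proof (rule ccontr)
    assume "x \<notin> {1..m}"
    then have "shift m \<sigma> x = x" using permutes_not_in[OF P'] by blast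
    then show False using fx k \<open>x \<notin> {1..m}\<close> by simp
  qed
  have "\<sigma> (Suc x) = k" using fx x unfolding shift_def by auto
  then have "inv \<sigma> k = Suc x" using permutes_inv_eq[OF P] by blast
  then show ?thesis unfolding act_def using x_def by simp
qed

lemma word_act_shift:
  assumes T: "\<sigma> \<in> Tperm (Suc m)" and s1: "\<sigma> 1 = Suc m" and m: "m \<ge> 1"
  shows "word (Suc m) (act \<sigma> s) = word m (act (shift m \<sigma>) (\<lambda>i. s (Suc i))) @ [s 1]"
proof -
  have P: "\<sigma> permutes {1..Suc m}" using T unfolding Tperm_def by blast
  have "inv \<sigma> (Suc m) = 1" using permutes_inv_eq[OF P] s1 by blast
  then have "act \<sigma> s (Suc m) = s 1" unfolding act_def by simp
  moreover have "word m (act \<sigma> s) = word m (act (shift m \<sigma>) (\<lambda>i. s (Suc i)))"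
    by (rule word_cong) (rule act_shift[OF T s1 m])
  ultimately show ?thesis unfolding word_Suc by simp
qed

lemma word_act_last:
  assumes T: "\<sigma> \<in> Tperm (Suc m)" and fx: "\<sigma> (Suc m) = Suc m"
  shows "word (Suc m) (act \<sigma> s) = word m (act \<sigma> s) @ [s (Suc m)]"
proof -
  have P: "\<sigma> permutes {1..Suc m}" using T unfolding Tperm_def by blast
  have "inv \<sigma> (Suc m) = Suc m" using permutes_inv_eq[OF P] fx by blast
  then show ?thesis unfolding word_Suc act_def by simp
qed

lemma T_ext:
  assumes T: "\<sigma> \<in> Tperm m" and m: "m \<ge> 1"
  shows "extp m \<sigma> \<in> Tperm (Suc m)" "extp m \<sigma> 1 = Suc m" "shift m (extp m \<sigma>) = \<sigma>"
proof -
  obtain t where P: "\<sigma> permutes {1..m}" and t: "t \<in> {1..m}"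
    and dec: "\<And>i j. 1 \<le> i \<Longrightarrow> i < j \<Longrightarrow> j \<le> t \<Longrightarrow> \<sigma> i > \<sigma> j" and t1: "\<sigma> t = 1"
    and inc: "\<And>i j. t \<le> i \<Longrightarrow> i < j \<Longrightarrow> j \<le> m \<Longrightarrow> \<sigma> i < \<sigma> j"
    by (rule TpermD[OF T]) blast
  let ?f = "extp m \<sigma>"
  have rng: "\<And>i. i \<in> {1..m} \<Longrightarrow> \<sigma> i \<in> {1..m}" using perm_range[OF P] by blast
  show "?f 1 = Suc m" unfolding extp_def by simp
  show "shift m ?f = \<sigma>"
  proof
    fix i show "shift m ?f i = \<sigma> i"
      unfolding shift_def extp_def using permutes_not_in[OF P, of i] by auto
  qed
  have inj: "inj_on ?f {1..Suc m}"
  proof (rule inj_onI)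
    fix x y assume x: "x \<in> {1..Suc m}" and y: "y \<in> {1..Suc m}" and e: "?f x = ?f y"
    show "x = y"
    proof (cases "x = 1"; cases "y = 1")
      assume "x = 1" "y \<noteq> 1"
      then have "\<sigma> (y - 1) = Suc m" using e y unfolding extp_def by auto
      moreover have "\<sigma> (y - 1) \<in> {1..m}" by (rule rng) (use y \<open>y \<noteq> 1\<close> in auto)
      ultimately show ?thesis by simp
    next
      assume "x \<noteq> 1" "y = 1"
      then have "\<sigma> (x - 1) = Suc m" using e x unfolding extp_def by auto
      moreover have "\<sigma> (x - 1) \<in> {1..m}" by (rule rng) (use x \<open>x \<noteq> 1\<close> in auto)
      ultimately show ?thesis by simp
    next
      assume "x \<noteq> 1" "y \<noteq> 1"
      then have "\<sigma> (x - 1) = \<sigma> (y - 1)" using e x y unfolding extp_def by auto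
      then have "x - 1 = y - 1" using permutes_inj[OF P] by (auto dest: injD)
      then show ?thesis using \<open>x \<noteq> 1\<close> \<open>y \<noteq> 1\<close> x y by auto
    qed simp
  qed
  have sub: "?f ` {1..Suc m} \<subseteq> {1..Suc m}"
  proof
    fix y assume "y \<in> ?f ` {1..Suc m}"
    then obtain x where x: "x \<in> {1..Suc m}" "y = ?f x" by blast
    show "y \<in> {1..Suc m}"
    proof (cases "x = 1")
      case True then show ?thesis using x unfolding extp_def by simp
    next
      case False
      then have "y = \<sigma> (x - 1)" using x unfolding extp_def by auto
      moreover have "\<sigma> (x - 1) \<in> {1..m}" by (rule rng) (use x False in auto)
      ultimately show ?thesis by auto
    qed
  qed
  have img: "?f ` {1..Suc m} = {1..Suc m}" by (rule endo_inj_surj[OF _ sub inj]) simp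
  have "bij_betw ?f {1..Suc m} {1..Suc m}" unfolding bij_betw_def using inj img by blast
  then have P': "?f permutes {1..Suc m}"
    by (rule bij_imp_permutes) (auto simp: extp_def)
  have t': "Suc t \<in> {1..Suc m}" using t by auto
  show "?f \<in> Tperm (Suc m)"
  proof (rule TpermI[OF P' t'])
    fix i j assume ij: "1 \<le> i" "i < j" "j \<le> Suc t"
    show "?f i > ?f j"
    proof (cases "i = 1")
      case True
      have "\<sigma> (j - 1) \<in> {1..m}" by (rule rng) (use ij t in auto)
      then show ?thesis using True ij t unfolding extp_def by auto
    next
      case False
      then show ?thesis using dec[of "i - 1" "j - 1"] ij t unfolding extp_def by auto
    qed
  next
    show "?f (Suc t) = 1" using t t1 unfolding extp_def by auto
  next
    fix i j assume ij: "Suc t \<le> i" "i < j" "j \<le> Suc m"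
    then show "?f i < ?f j" using inc[of "i - 1" "j - 1"] t unfolding extp_def by auto
  qed
qed

lemma sound: "\<sigma> \<in> Tperm (Suc n) \<Longrightarrow> popr (word (Suc n) s) (rev (word (Suc n) (act \<sigma> s)))"
proof (induction n arbitrary: \<sigma> s)
  case 0
  have P: "\<sigma> permutes {1..Suc 0}" using 0 unfolding Tperm_def by blast
  have "\<sigma> 1 \<in> {1..Suc 0}" using perm_range[OF P, of 1] by simp
  then have "\<sigma> 1 = 1" by simp
  then have "inv \<sigma> 1 = 1" using permutes_inv_eq[OF P] by blast
  then have "word (Suc 0) (act \<sigma> s) = word (Suc 0) s" unfolding word_def act_def by simp
  then show ?case by (simp add: popr_self word_def)
next
  case (Suc n)
  have "\<sigma> 1 = Suc (Suc n) \<or> \<sigma> (Suc (Suc n)) = Suc (Suc n)" using T_max[OF Suc.prems] by simp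
  then show ?case
  proof
    assume s1: "\<sigma> 1 = Suc (Suc n)"
    have T': "shift (Suc n) \<sigma> \<in> Tperm (Suc n)" using T_shift[OF Suc.prems s1] by simp
    have "word (Suc (Suc n)) (act \<sigma> s) = word (Suc n) (act (shift (Suc n) \<sigma>) (\<lambda>i. s (Suc i))) @ [s 1]"
      using word_act_shift[OF Suc.prems s1] by simp
    moreover have "word (Suc (Suc n)) s = s 1 # word (Suc n) (\<lambda>i. s (Suc i))" by (rule word_Suc_Cons)
    ultimately show ?case using Suc.IH[OF T', of "\<lambda>i. s (Suc i)"] by (simp add: pL)
  next
    assume fx: "\<sigma> (Suc (Suc n)) = Suc (Suc n)"
    have T': "\<sigma> \<in> Tperm (Suc n)" using T_restrict[OF Suc.prems fx] by simp
    have "word (Suc (Suc n)) (act \<sigma> s) = word (Suc n) (act \<sigma> s) @ [s (Suc (Suc n))]"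
      by (rule word_act_last[OF Suc.prems fx])
    moreover have "word (Suc (Suc n)) s = word (Suc n) s @ [s (Suc (Suc n))]" by (rule word_Suc)
    ultimately show ?case using Suc.IH[OF T', of s] by (simp add: pR)
  qed
qed

lemma id_T1: "id \<in> Tperm (Suc 0)"
  by (rule TpermI[of _ _ 1]) auto

lemma complete: "popr (word (Suc n) s) z \<Longrightarrow> \<exists>\<sigma>\<in>Tperm (Suc n). rev (word (Suc n) (act \<sigma> s)) = z"
proof (induction n arbitrary: s z)
  case 0
  have "word (Suc 0) s = replicate 1 (s 1)" unfolding word_def by simp
  then have "z = word (Suc 0) s" using 0 popr_rep by metis
  moreover have "act id s 1 = s 1" unfolding act_def by (simp add: inv_id)
  then have "word (Suc 0) (act id s) = word (Suc 0) s" unfolding word_def by simp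
  moreover have "rev (word (Suc 0) s) = word (Suc 0) s" unfolding word_def by simp
  ultimately have "rev (word (Suc 0) (act id s)) = z" by simp
  then show ?case using id_T1 by blast
next
  case (Suc n)
  have "length z = Suc (Suc n)" using popr_len[OF Suc.prems] word_len by metis
  then obtain e z' where z: "z = e # z'" by (cases z) auto
  have wC: "word (Suc (Suc n)) s = s 1 # word (Suc n) (\<lambda>i. s (Suc i))" by (rule word_Suc_Cons)
  have wS: "word (Suc (Suc n)) s = word (Suc n) s @ [s (Suc (Suc n))]" by (rule word_Suc)
  have "popr (word (Suc (Suc n)) s) (e # z')" using Suc.prems z by simp
  then have "(s 1 = e \<and> popr (word (Suc n) (\<lambda>i. s (Suc i))) z') \<or> (s (Suc (Suc n)) = e \<and> popr (word (Suc n) s) z')"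
    unfolding popr_Cons using wC wS by (metis butlast_snoc last_snoc list.sel(1) list.sel(3))
  then show ?case
  proof
    assume A: "s 1 = e \<and> popr (word (Suc n) (\<lambda>i. s (Suc i))) z'"
    then obtain \<sigma>' where T': "\<sigma>' \<in> Tperm (Suc n)" and r: "rev (word (Suc n) (act \<sigma>' (\<lambda>i. s (Suc i)))) = z'"
      using Suc.IH by blast
    have E: "extp (Suc n) \<sigma>' \<in> Tperm (Suc (Suc n))" "extp (Suc n) \<sigma>' 1 = Suc (Suc n)" "shift (Suc n) (extp (Suc n) \<sigma>') = \<sigma>'"
      using T_ext[OF T'] by auto
    have "word (Suc (Suc n)) (act (extp (Suc n) \<sigma>') s) = word (Suc n) (act \<sigma>' (\<lambda>i. s (Suc i))) @ [s 1]"
      using word_act_shift[OF E(1) E(2)] E(3) by simp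
    then have "rev (word (Suc (Suc n)) (act (extp (Suc n) \<sigma>') s)) = z" using r A z by simp
    then show ?thesis using E(1) by blast
  next
    assume A: "s (Suc (Suc n)) = e \<and> popr (word (Suc n) s) z'"
    then obtain \<sigma>' where T': "\<sigma>' \<in> Tperm (Suc n)" and r: "rev (word (Suc n) (act \<sigma>' s)) = z'"
      using Suc.IH by blast
    have T2: "\<sigma>' \<in> Tperm (Suc (Suc n))" using T_extend[OF T'] by simp
    have P: "\<sigma>' permutes {1..Suc n}" using T' unfolding Tperm_def by blast
    have fx: "\<sigma>' (Suc (Suc n)) = Suc (Suc n)" using permutes_not_in[OF P] by simp
    have "word (Suc (Suc n)) (act \<sigma>' s) = word (Suc n) (act \<sigma>' s) @ [s (Suc (Suc n))]"
      by (rule word_act_last[OF T2 fx])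
    then have "rev (word (Suc (Suc n)) (act \<sigma>' s)) = z" using r A z by simp
    then show ?thesis using T2 by blast
  qed
qed



lemma orbit_eq:
  assumes mir: "mirrored (Suc n) s s'"
  shows "popr (word (Suc n) s) z \<longleftrightarrow> popr (word (Suc n) s') z"
proof
  assume "popr (word (Suc n) s) z"
  then obtain \<sigma> where T: "\<sigma> \<in> Tperm (Suc n)" and r: "rev (word (Suc n) (act \<sigma> s)) = z"
    using complete by blast
  obtain \<sigma>' where T': "\<sigma>' \<in> Tperm (Suc n)" and e: "seq_eq (Suc n) (act \<sigma> s) (act \<sigma>' s')"
    using mir T unfolding mirrored_def by blast
  have "word (Suc n) (act \<sigma> s) = word (Suc n) (act \<sigma>' s')"
    by (rule word_cong) (use e in \<open>auto simp: seq_eq_def\<close>)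
  then show "popr (word (Suc n) s') z" using sound[OF T', of s'] r by simp
next
  assume "popr (word (Suc n) s') z"
  then obtain \<tau>' where T: "\<tau>' \<in> Tperm (Suc n)" and r: "rev (word (Suc n) (act \<tau>' s')) = z"
    using complete by blast
  obtain \<tau> where T': "\<tau> \<in> Tperm (Suc n)" and e: "seq_eq (Suc n) (act \<tau>' s') (act \<tau> s)"
    using mir T unfolding mirrored_def by blast
  have "word (Suc n) (act \<tau>' s') = word (Suc n) (act \<tau> s)"
    by (rule word_cong) (use e in \<open>auto simp: seq_eq_def\<close>)
  then show "popr (word (Suc n) s) z" using sound[OF T', of s] r by simp
qed

theorem mainTheorem18:
  fixes m :: nat and s s' :: "nat \<Rightarrow> 'a"
  assumes "mirrored m s s'"
  shows "special_pair m s s'"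
proof (cases m)
  case 0
  then show ?thesis unfolding special_pair_def by simp
next
  case (Suc n)
  have H: "\<forall>z. popr (word m s) z \<longleftrightarrow> popr (word m s') z"
    using orbit_eq assms Suc by blast
  have "word m s' = word m s \<or> word m s' = rev (word m s)" by (rule popr_det[OF H])
  then show ?thesis
  proof
    assume eq: "word m s' = word m s"
    have "s' i = s i" if "i \<in> {1..m}" for i
    proof -
      have "i - 1 < m" using that by auto
      then have "word m s' ! (i - 1) = word m s ! (i - 1)" using eq by simp
      moreover have "word m s' ! (i - 1) = s' (Suc (i - 1))" by (rule word_nth[OF \<open>i - 1 < m\<close>])
      moreover have "word m s ! (i - 1) = s (Suc (i - 1))" by (rule word_nth[OF \<open>i - 1 < m\<close>])
      moreover have "Suc (i - 1) = i" using that by auto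
      ultimately show ?thesis by simp
    qed
    then show ?thesis unfolding special_pair_def is_direct_def by auto
  next
    assume eq: "word m s' = rev (word m s)"
    have "rev_seq m s' i = s i" if "i \<in> {1..m}" for i
    proof -
      have k: "m - i < m" using that by auto
      have "word m s' ! (m - i) = rev (word m s) ! (m - i)" using eq by simp
      also have "\<dots> = word m s ! (length (word m s) - Suc (m - i))" by (rule rev_nth) (simp add: word_len k)
      also have "\<dots> = word m s ! (i - 1)" using that by (simp add: word_len)
      finally have "word m s' ! (m - i) = word m s ! (i - 1)" .
      moreover have "word m s' ! (m - i) = s' (Suc (m - i))" by (rule word_nth[OF k])
      moreover have "word m s ! (i - 1) = s (Suc (i - 1))" by (rule word_nth) (use that in auto)
      ultimately have "s' (Suc (m - i)) = s i" using that by auto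
      moreover have "Suc (m - i) = m + 1 - i" using that by auto
      ultimately show ?thesis unfolding rev_seq_def by simp
    qed
    then show ?thesis unfolding special_pair_def is_reverse_def by auto
  qed
qed

end
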